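(* Let $A \subseteq B$ be an integral extension of commutative rings, and suppose that $B$ is sublocalizable. Then $A$ is sublocalizable, with unique local subring (its sublocalization) $[1]^{A^\times}_A = [1]^{B^\times}_B \cap A$, which has maximal ideal $J(A) = J(B) \cap A$ and units $A^\times = B^\times \cap A$.
   Context: $A^\times$ is the unit group and $J(A)$ the Jacobson radical. A commutative ring $A$ is sublocalizable if it is nontrivial and $u+v\in A^\times\cup J(A)$ for all $u,v\in A^\times$; its sublocalization is the local subring $A^\times\cup J(A)$. For $T\subseteq A$, $[1]^T_A$ is the smallest additive subgroup $F$ of $A$ containing $1$ such that $ta\in F$ with $t\in T$, $a\in A$ implies $a\in F$; $[1]^{A^\times}_A$ equals the subring of $A$ generated by $A^\times$. *)

theory Defs
  imports "HOL-Algebra.Algebra"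
begin

definition jacobson :: "('a, 'b) ring_scheme \<Rightarrow> 'a set" where
  "jacobson R = carrier R \<inter> \<Inter> {M. maximalideal M R}"

definition sublocalizable :: "('a, 'b) ring_scheme \<Rightarrow> bool" where
  "sublocalizable R \<longleftrightarrow> \<one>\<^bsub>R\<^esub> \<noteq> \<zero>\<^bsub>R\<^esub> \<and>
     (\<forall>u \<in> Units R. \<forall>v \<in> Units R. u \<oplus>\<^bsub>R\<^esub> v \<in> Units R \<union> jacobson R)"

definition sublocalization :: "('a, 'b) ring_scheme \<Rightarrow> 'a set" where
  "sublocalization R = Units R \<union> jacobson R"

text \<open>The set [1]^T_R: smallest additive subgroup F containing 1 such that
  t*a in F with t in T, a in R implies a in F.\<close>
definition one_closure :: "('a, 'b) ring_scheme \<Rightarrow> 'a set \<Rightarrow> 'a set" where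
  "one_closure R T = \<Inter> {F. additive_subgroup F R \<and> \<one>\<^bsub>R\<^esub> \<in> F \<and>
      (\<forall>t \<in> T. \<forall>a \<in> carrier R. t \<otimes>\<^bsub>R\<^esub> a \<in> F \<longrightarrow> a \<in> F)}"

definition local_ring :: "('a, 'b) ring_scheme \<Rightarrow> bool" where
  "local_ring R \<longleftrightarrow> (\<exists>!M. maximalideal M R)"

text \<open>x is integral over the subset K of R: root of a monic polynomial with
  coefficients in K (HOL-Algebra list polynomials, leading coefficient first).\<close>
definition integral_over :: "('a, 'b) ring_scheme \<Rightarrow> 'a set \<Rightarrow> 'a \<Rightarrow> bool" where
  "integral_over R K x \<longleftrightarrow> (\<exists>p. p \<noteq> [] \<and> polynomial\<^bsub>R\<^esub> K p \<and> hd p = \<one>\<^bsub>R\<^esub> \<and> ring.eval R p x = \<zero>\<^bsub>R\<^esub>)"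

end

theory Submission imports Defs begin

context cring begin

lemma krull:
  assumes I: "ideal I R" and one: "\<one> \<notin> I"
  shows "\<exists>M. maximalideal M R \<and> I \<subseteq> M"
proof -
  define F where "F = {J. ideal J R \<and> I \<subseteq> J \<and> \<one> \<notin> J}"
  have "F \<noteq> {}" using I one unfolding F_def by auto
  moreover have "\<Union>C \<in> F" if "C \<noteq> {}" "subset.chain F C" for C
  proof -
    have ch: "subset.chain {I. ideal I R} C" using that(2) unfolding F_def pred_on.chain_def by auto
    have "ideal (\<Union>C) R" using chain_Union_is_ideal[OF ch] that(1) by simp
    moreover have "I \<subseteq> \<Union>C" using that(1) \<open>subset.chain F C\<close> unfolding F_def pred_on.chain_def by blast
    moreover have "\<one> \<notin> \<Union>C" using that unfolding F_def pred_on.chain_def by auto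
    ultimately show ?thesis unfolding F_def by auto
  qed
  ultimately obtain M where M: "M \<in> F" and mx: "\<forall>Y\<in>F. M \<subseteq> Y \<longrightarrow> Y = M"
    using subset_Zorn_nonempty[of F] by blast
  have idM: "ideal M R" and IM: "I \<subseteq> M" and oM: "\<one> \<notin> M" using M unfolding F_def by auto
  have "maximalideal M R"
  proof (rule maximalidealI[OF idM])
    show "carrier R \<noteq> M" using oM by auto
    fix J assume J: "ideal J R" "M \<subseteq> J" "J \<subseteq> carrier R"
    show "J = M \<or> J = carrier R"
    proof (cases "\<one> \<in> J")
      case True then show ?thesis using ideal.one_imp_carrier[OF J(1)] by auto
    next
      case False then have "J \<in> F" using J IM unfolding F_def by auto
      then show ?thesis using mx J by auto
    qed
  qed
  then show ?thesis using IM by auto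
qed

lemma exists_maximal:
  assumes "\<one> \<noteq> \<zero>" shows "\<exists>M. maximalideal M R"
  using krull[OF zeroideal] assms by auto

lemma jacobson_ideal:
  assumes "\<one> \<noteq> \<zero>" shows "ideal (jacobson R) R"
proof -
  have ne: "{M. maximalideal M R} \<noteq> {}" using exists_maximal[OF assms] by auto
  have "jacobson R = \<Inter>{M. maximalideal M R}"
    unfolding jacobson_def using ne maximalideal.axioms(1) ideal.axioms(1) additive_subgroup.a_subset
    by blast
  then show ?thesis using i_Intersect[OF _ ne] maximalideal.axioms(1) by auto
qed

lemma jacobson_carrier: "jacobson R \<subseteq> carrier R"
  unfolding jacobson_def by auto

lemma nonunit_in_maximal:
  assumes y: "y \<in> carrier R" "y \<notin> Units R"
  shows "\<exists>M. maximalideal M R \<and> y \<in> M"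
proof -
  have "\<one> \<notin> PIdl y"
  proof
    assume "\<one> \<in> PIdl y"
    then obtain x where "x \<in> carrier R" "\<one> = x \<otimes> y" unfolding cgenideal_def by auto
    then have "y \<in> Units R" using y m_comm unfolding Units_def by auto
    then show False using y by auto
  qed
  then obtain M where "maximalideal M R" "PIdl y \<subseteq> M" using krull[OF cgenideal_ideal[OF y(1)]] by auto
  then show ?thesis using cgenideal_self[OF y(1)] by auto
qed

lemma jacobson_unit:
  assumes x: "x \<in> jacobson R" and r: "r \<in> carrier R"
  shows "\<one> \<oplus> r \<otimes> x \<in> Units R"
proof (rule ccontr)
  have xc: "x \<in> carrier R" using x jacobson_carrier by auto
  assume "\<one> \<oplus> r \<otimes> x \<notin> Units R"
  then obtain M where M: "maximalideal M R" "\<one> \<oplus> r \<otimes> x \<in> M"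
    using nonunit_in_maximal[of "\<one> \<oplus> r \<otimes> x"] xc r by auto
  interpret maximalideal M R by fact
  have "x \<in> M" using x M(1) unfolding jacobson_def by auto
  then have "r \<otimes> x \<in> M" using r I_l_closed by auto
  then have "(\<one> \<oplus> r \<otimes> x) \<ominus> r \<otimes> x \<in> M" using M(2) by (simp add: a_minus_def additive_subgroup.a_closed additive_subgroup.a_inv_closed is_additive_subgroup)
  moreover have "(\<one> \<oplus> r \<otimes> x) \<ominus> r \<otimes> x = \<one>" using r xc by algebra
  ultimately have "\<one> \<in> M" by simp
  then show False using one_imp_carrier I_notcarr by auto
qed

lemma jacobsonI:
  assumes xc: "x \<in> carrier R" and u: "\<And>r. r \<in> carrier R \<Longrightarrow> \<one> \<oplus> r \<otimes> x \<in> Units R"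
  shows "x \<in> jacobson R"
  unfolding jacobson_def
proof (intro IntI xc InterI, simp)
  fix M assume M: "maximalideal M R"
  interpret maximalideal M R by fact
  show "x \<in> M"
  proof (rule ccontr)
    assume xM: "x \<notin> M"
    have id: "ideal (M <+> PIdl x) R" using add_ideals[OF is_ideal cgenideal_ideal[OF xc]] .
    have "M \<subseteq> M <+> PIdl x"
    proof
      fix m assume "m \<in> M"
      moreover have "\<zero> \<in> PIdl x" using xc unfolding cgenideal_def by (auto intro!: exI[of _ \<zero>])
      moreover have "m = m \<oplus> \<zero>" using \<open>m \<in> M\<close> a_subset by auto
      ultimately show "m \<in> M <+> PIdl x" unfolding set_add_def' by blast
    qed
    moreover have "x \<in> M <+> PIdl x"
    proof -
      have "x = \<zero> \<oplus> x" using xc by simp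
      moreover have "x \<in> PIdl x" using cgenideal_self[OF xc] .
      ultimately show ?thesis unfolding set_add_def' using additive_subgroup.zero_closed[OF is_additive_subgroup] by auto
    qed
    moreover have "M <+> PIdl x \<subseteq> carrier R" using ideal.axioms(1)[OF id] additive_subgroup.a_subset by blast
    ultimately have "M <+> PIdl x = carrier R" using I_maximal[OF id] xM by blast
    then have "\<one> \<in> M <+> PIdl x" by simp
    then obtain m r where mr: "m \<in> M" "r \<in> carrier R" "\<one> = m \<oplus> r \<otimes> x"
      unfolding set_add_def' cgenideal_def by auto
    have mc: "m \<in> carrier R" using mr a_subset by auto
    have "m = \<one> \<oplus> (\<ominus> r) \<otimes> x" using mr mc xc by (simp add: algebra_simps, algebra)
    then have "m \<in> Units R" using u[of "\<ominus> r"] mr by simp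
    then have "\<one> \<in> M" using mr(1) I_r_closed[of m "inv m"] by (simp add: Units_r_inv) 
    then show False using one_imp_carrier I_notcarr by auto
  qed
qed

end

context cring begin

lemma unit_neg: "u \<in> Units R \<Longrightarrow> \<ominus> u \<in> Units R"
proof -
  assume u: "u \<in> Units R"
  then have uc: "u \<in> carrier R" "inv u \<in> carrier R" "inv u \<otimes> u = \<one>" by auto
  have "(\<ominus> (inv u)) \<otimes> (\<ominus> u) = inv u \<otimes> u" using uc by algebra
  moreover have "(\<ominus> u) \<otimes> (\<ominus> (inv u)) = inv u \<otimes> u" using uc by algebra
  ultimately have "(\<ominus> (inv u)) \<otimes> (\<ominus> u) = \<one>" "(\<ominus> u) \<otimes> (\<ominus> (inv u)) = \<one>" using uc by auto
  then show ?thesis using uc unfolding Units_def by (auto intro!: bexI[of _ "\<ominus> (inv u)"])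
qed

lemma one_not_jac: "\<one> \<noteq> \<zero> \<Longrightarrow> \<one> \<notin> jacobson R"
proof
  assume nz: "\<one> \<noteq> \<zero>" and "\<one> \<in> jacobson R"
  then have "\<one> \<oplus> (\<ominus> \<one>) \<otimes> \<one> \<in> Units R" using jacobson_unit[of \<one> "\<ominus> \<one>"] by auto
  then have "\<zero> \<in> Units R" by (simp add: r_neg)
  then show False using nz unfolding Units_def by auto
qed

lemma unit_plus_jac:
  assumes u: "u \<in> Units R" and j: "j \<in> jacobson R"
  shows "u \<oplus> j \<in> Units R"
proof -
  have jc: "j \<in> carrier R" using j jacobson_carrier by auto
  have uc: "u \<in> carrier R" "inv u \<in> carrier R" "u \<otimes> inv u = \<one>" using u by auto
  have "u \<oplus> j = u \<otimes> (\<one> \<oplus> inv u \<otimes> j)" using uc jc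
    by (simp add: r_distr m_assoc[symmetric])
  moreover have "\<one> \<oplus> inv u \<otimes> j \<in> Units R" using jacobson_unit[OF j] uc by auto
  ultimately show ?thesis using u by simp
qed

definition SL where "SL = Units R \<union> jacobson R"

context
  assumes sl: "sublocalizable R"
begin

lemma sl_nz: "\<one> \<noteq> \<zero>" using sl unfolding sublocalizable_def by auto

lemma J_ideal: "ideal (jacobson R) R" using jacobson_ideal[OF sl_nz] .

lemma SL_carrier: "SL \<subseteq> carrier R" unfolding SL_def using jacobson_carrier by auto

lemma SL_add: "x \<in> SL \<Longrightarrow> y \<in> SL \<Longrightarrow> x \<oplus> y \<in> SL"
proof -
  assume x: "x \<in> SL" and y: "y \<in> SL"
  interpret J: ideal "jacobson R" R by (rule J_ideal)
  show ?thesis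
  proof (cases "x \<in> Units R")
    case True
    then show ?thesis
    proof (cases "y \<in> Units R")
      case True then show ?thesis using sl \<open>x \<in> Units R\<close> unfolding sublocalizable_def SL_def by auto
    next
      case False then have "y \<in> jacobson R" using y unfolding SL_def by auto
      then show ?thesis using unit_plus_jac \<open>x \<in> Units R\<close> unfolding SL_def by auto
    qed
  next
    case False then have xj: "x \<in> jacobson R" using x unfolding SL_def by auto
    show ?thesis
    proof (cases "y \<in> Units R")
      case True then show ?thesis using unit_plus_jac[OF True xj] xj True jacobson_carrier
        unfolding SL_def by (auto simp: a_comm)
    next
      case False then have "y \<in> jacobson R" using y unfolding SL_def by auto
      then show ?thesis using xj J.a_closed unfolding SL_def by auto
    qed
  qed
qed

lemma SL_mult: "x \<in> SL \<Longrightarrow> y \<in> SL \<Longrightarrow> x \<otimes> y \<in> SL"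
proof -
  assume x: "x \<in> SL" and y: "y \<in> SL"
  interpret J: ideal "jacobson R" R by (rule J_ideal)
  have "x \<in> carrier R" "y \<in> carrier R" using x y SL_carrier by auto
  then show ?thesis using x y J.I_l_closed J.I_r_closed unfolding SL_def by auto
qed

lemma SL_neg: "x \<in> SL \<Longrightarrow> \<ominus> x \<in> SL"
proof -
  assume x: "x \<in> SL"
  interpret J: ideal "jacobson R" R by (rule J_ideal)
  show ?thesis using x unit_neg J.a_inv_closed unfolding SL_def by auto
qed

lemma SL_subring: "subring SL R"
proof (rule subringI[OF SL_carrier])
  show "\<one> \<in> SL" unfolding SL_def by auto
qed (auto intro: SL_add SL_mult SL_neg)

lemma SL_one_closure: "one_closure R (Units R) = SL"
proof
  show "one_closure R (Units R) \<subseteq> SL"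
    unfolding one_closure_def
  proof (rule Inter_lower, safe)
    show "additive_subgroup SL R"
      using subring.axioms(1)[OF SL_subring] by (simp add: additive_subgroup_def)
    show "\<one> \<in> SL" unfolding SL_def by auto
    fix t a assume t: "t \<in> Units R" and a: "a \<in> carrier R" and ta: "t \<otimes> a \<in> SL"
    have "inv t \<in> SL" using t unfolding SL_def by auto
    then have "inv t \<otimes> (t \<otimes> a) \<in> SL" using SL_mult ta by auto
    moreover have "inv t \<otimes> (t \<otimes> a) = a"
    proof -
      have "t \<in> carrier R" "inv t \<in> carrier R" "inv t \<otimes> t = \<one>" using t by auto
      then show ?thesis using a by (metis m_assoc l_one)
    qed
    ultimately show "a \<in> SL" by simp
  qed
  show "SL \<subseteq> one_closure R (Units R)"
    unfolding one_closure_def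
  proof (rule Inter_greatest, safe)
    fix F x assume F: "additive_subgroup F R" "\<one> \<in> F"
      and cl: "\<forall>t\<in>Units R. \<forall>a\<in>carrier R. t \<otimes> a \<in> F \<longrightarrow> a \<in> F" and x: "x \<in> SL"
    have unitF: "u \<in> F" if u: "u \<in> Units R" for u
    proof -
      have "inv u \<in> Units R" "u \<in> carrier R" "inv u \<otimes> u = \<one>" using u by auto
      then show ?thesis using cl F(2) by metis
    qed
    show "x \<in> F"
    proof (cases "x \<in> Units R")
      case True then show ?thesis using unitF by auto
    next
      case False then have xj: "x \<in> jacobson R" using x unfolding SL_def by auto
      have xc: "x \<in> carrier R" using xj jacobson_carrier by auto
      have "\<one> \<oplus> \<one> \<otimes> x \<in> Units R" using jacobson_unit[OF xj] by auto
      then have "\<one> \<oplus> x \<in> F" using unitF xc by auto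
      then have "(\<one> \<oplus> x) \<oplus> \<ominus> \<one> \<in> F" using F additive_subgroup.a_closed additive_subgroup.a_inv_closed by metis
      moreover have "(\<one> \<oplus> x) \<oplus> \<ominus> \<one> = x" using xc by algebra
      ultimately show ?thesis by simp
    qed
  qed
qed

lemma SL_ring: "ring (R\<lparr>carrier := SL\<rparr>)"
  using subring_is_ring[OF SL_subring] .

lemma J_ideal_SL: "ideal (jacobson R) (R\<lparr>carrier := SL\<rparr>)"
proof (rule idealI[OF SL_ring])
  interpret J: ideal "jacobson R" R by (rule J_ideal)
  have "subgroup (jacobson R) ((add_monoid R)\<lparr>carrier := SL\<rparr>)"
    using add.subgroup_incl[OF J.a_subgroup subring.axioms(1)[OF SL_subring]] unfolding SL_def by auto
  then show "subgroup (jacobson R) (add_monoid (R\<lparr>carrier := SL\<rparr>))" by simp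
  fix a x assume a: "a \<in> jacobson R" and x: "x \<in> carrier (R\<lparr>carrier := SL\<rparr>)"
  then have "x \<in> carrier R" using SL_carrier by auto
  then show "x \<otimes>\<^bsub>R\<lparr>carrier := SL\<rparr>\<^esub> a \<in> jacobson R" "a \<otimes>\<^bsub>R\<lparr>carrier := SL\<rparr>\<^esub> x \<in> jacobson R"
    using a J.I_l_closed J.I_r_closed by auto
qed

lemma no_units_in_proper:
  assumes I: "ideal I (R\<lparr>carrier := SL\<rparr>)" and one: "\<one> \<notin> I"
  shows "I \<subseteq> jacobson R"
proof
  fix x assume x: "x \<in> I"
  have xS: "x \<in> SL" using ideal.axioms(1)[OF I] additive_subgroup.a_subset x by fastforce
  show "x \<in> jacobson R"
  proof (rule ccontr)
    assume "x \<notin> jacobson R"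
    then have u: "x \<in> Units R" using xS unfolding SL_def by auto
    then have "inv x \<in> SL" unfolding SL_def by auto
    then have "inv x \<otimes>\<^bsub>R\<lparr>carrier := SL\<rparr>\<^esub> x \<in> I" using ideal.I_l_closed[OF I x] by simp
    then have "\<one> \<in> I" using u by simp
    then show False using one by simp
  qed
qed

lemma J_maximal_SL: "maximalideal (jacobson R) (R\<lparr>carrier := SL\<rparr>)"
proof (rule maximalidealI[OF J_ideal_SL])
  have "\<one> \<in> SL" unfolding SL_def by auto
  then show "carrier (R\<lparr>carrier := SL\<rparr>) \<noteq> jacobson R" using one_not_jac[OF sl_nz] by auto
  fix I assume I: "ideal I (R\<lparr>carrier := SL\<rparr>)" "jacobson R \<subseteq> I" "I \<subseteq> carrier (R\<lparr>carrier := SL\<rparr>)"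
  show "I = jacobson R \<or> I = carrier (R\<lparr>carrier := SL\<rparr>)"
  proof (cases "\<one> \<in> I")
    case True
    then have "I = carrier (R\<lparr>carrier := SL\<rparr>)" using ideal.one_imp_carrier[OF I(1)] by simp
    then show ?thesis by simp
  next
    case False then show ?thesis using no_units_in_proper[OF I(1)] I(2) by auto
  qed
qed

lemma SL_local: "local_ring (R\<lparr>carrier := SL\<rparr>)"
  unfolding local_ring_def
proof (rule ex1I[of _ "jacobson R"])
  show "maximalideal (jacobson R) (R\<lparr>carrier := SL\<rparr>)" by (rule J_maximal_SL)
  fix M assume M: "maximalideal M (R\<lparr>carrier := SL\<rparr>)"
  interpret M: maximalideal M "R\<lparr>carrier := SL\<rparr>" by fact
  have "\<one> \<notin> M"
  proof
    assume "\<one> \<in> M"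
    then have "M = carrier (R\<lparr>carrier := SL\<rparr>)" using M.one_imp_carrier by simp
    then show False using M.I_notcarr by simp
  qed
  then have MJ: "M \<subseteq> jacobson R" using no_units_in_proper M.is_ideal by auto
  have "jacobson R \<subseteq> carrier (R\<lparr>carrier := SL\<rparr>)" unfolding SL_def by auto
  then have "jacobson R = M \<or> jacobson R = carrier (R\<lparr>carrier := SL\<rparr>)"
    using M.I_maximal[OF J_ideal_SL MJ] by simp
  moreover have "\<one> \<in> SL" unfolding SL_def by auto
  ultimately show "M = jacobson R" using one_not_jac[OF sl_nz] by auto
qed

end
end

context cring begin

lemma ic_mult:
  assumes I: "ideal I R" and c: "x \<in> carrier R" "y \<in> carrier R" "z \<in> carrier R" and d: "x \<ominus> y \<in> I"
  shows "z \<otimes> x \<ominus> z \<otimes> y \<in> I"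
proof -
  have "z \<otimes> x \<ominus> z \<otimes> y = z \<otimes> (x \<ominus> y)" using c by algebra
  then show ?thesis using ideal.I_l_closed[OF I d c(3)] by simp
qed

lemma ic_add:
  assumes I: "ideal I R" and c: "x1 \<in> carrier R" "y1 \<in> carrier R" "x2 \<in> carrier R" "y2 \<in> carrier R"
    and d: "x1 \<ominus> y1 \<in> I" "x2 \<ominus> y2 \<in> I"
  shows "(x1 \<oplus> x2) \<ominus> (y1 \<oplus> y2) \<in> I"
proof -
  have "(x1 \<oplus> x2) \<ominus> (y1 \<oplus> y2) = (x1 \<ominus> y1) \<oplus> (x2 \<ominus> y2)" using c by algebra
  then show ?thesis using additive_subgroup.a_closed[OF ideal.axioms(1)[OF I] d] by simp
qed

lemma ic_pow:
  assumes I: "ideal I R" and y: "y \<in> carrier R" and d: "y \<ominus> \<one> \<in> I"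
  shows "y [^] (k::nat) \<ominus> \<one> \<in> I"
proof (induction k)
  case 0
  then show ?case using additive_subgroup.zero_closed[OF ideal.axioms(1)[OF I]] by (metis one_closed r_right_minus_eq nat_pow_0)
next
  case (Suc k)
  define w where "w = y [^] k"
  have w: "w \<in> carrier R" using y unfolding w_def by simp
  have "y [^] Suc k = w \<otimes> y" unfolding w_def by simp
  moreover have "w \<otimes> y \<ominus> \<one> = (w \<otimes> y \<ominus> w \<otimes> \<one>) \<oplus> (w \<ominus> \<one>)" using w y by algebra
  moreover have "w \<otimes> y \<ominus> w \<otimes> \<one> \<in> I" using ic_mult[OF I y one_closed w d] .
  ultimately show ?case using Suc additive_subgroup.a_closed[OF ideal.axioms(1)[OF I]] unfolding w_def by simp
qed

lemma pow_in_sub: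
  assumes A: "subring A R" and a: "a \<in> A"
  shows "a [^] (j::nat) \<in> A"
proof (induction j)
  case 0 then show ?case using subringE(3)[OF A] by simp
next
  case (Suc j) then show ?case using subringE(6)[OF A _ a] by simp
qed

lemma key:
  assumes A: "subring A R" and I: "ideal I R" and a: "a \<in> A" and c: "c \<in> carrier R"
    and ac: "a \<otimes> c \<ominus> \<one> \<in> I"
  shows "set p \<subseteq> A \<Longrightarrow> length p \<le> Suc m \<Longrightarrow> \<exists>a'\<in>A. a [^] m \<otimes> eval p c \<ominus> a' \<in> I"
proof (induction p arbitrary: m)
  case Nil
  have "\<zero> \<in> A" using subringE(2)[OF A] .
  moreover have "\<zero> \<in> I" using additive_subgroup.zero_closed[OF ideal.axioms(1)[OF I]] .
  moreover have "a \<in> carrier R" using a subringE(1)[OF A] by auto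
  ultimately show ?case by (auto simp: minus_eq intro!: bexI[of _ \<zero>])
next
  case (Cons x xs)
  have Ac: "A \<subseteq> carrier R" using subringE(1)[OF A] .
  have ac': "a \<in> carrier R" "x \<in> carrier R" "set xs \<subseteq> carrier R" using a Cons.prems Ac by auto
  define k where "k = length xs"
  have km: "k \<le> m" using Cons.prems unfolding k_def by simp
  obtain a1 where a1: "a1 \<in> A" "a [^] m \<otimes> eval xs c \<ominus> a1 \<in> I" using Cons.IH[of m] Cons.prems by auto
  define e where "e = eval xs c"
  have e: "e \<in> carrier R" unfolding e_def using eval_in_carrier ac' c by auto
  have ev: "eval (x # xs) c = x \<otimes> c [^] k \<oplus> e" unfolding e_def k_def by simp
  define amk where "amk = a [^] (m - k)"
  define ack where "ack = (a \<otimes> c) [^] k"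
  have amkA: "amk \<in> A" unfolding amk_def using pow_in_sub[OF A a] .
  have cc: "amk \<in> carrier R" "ack \<in> carrier R" "a [^] m \<in> carrier R" "c [^] k \<in> carrier R" "a1 \<in> carrier R"
    using amkA Ac ac' c a1 unfolding ack_def by auto
  have "a [^] m = amk \<otimes> a [^] k" unfolding amk_def using nat_pow_mult[OF ac'(1), of "m-k" k] km by simp
  then have amc: "a [^] m \<otimes> c [^] k = amk \<otimes> ack" unfolding ack_def
    using nat_pow_distrib[OF ac'(1) c] cc ac' c by (simp add: m_assoc)
  have eq: "a [^] m \<otimes> eval (x # xs) c = (x \<otimes> amk) \<otimes> ack \<oplus> a [^] m \<otimes> e"
  proof -
    have "a [^] m \<otimes> eval (x # xs) c = x \<otimes> (a [^] m \<otimes> c [^] k) \<oplus> a [^] m \<otimes> e"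
      unfolding ev using cc e ac' by algebra
    also have "\<dots> = (x \<otimes> amk) \<otimes> ack \<oplus> a [^] m \<otimes> e" unfolding amc using cc ac' by algebra
    finally show ?thesis .
  qed
  have p1: "ack \<ominus> \<one> \<in> I" unfolding ack_def using ic_pow[OF I _ ac] ac' c by simp
  have p2: "(x \<otimes> amk) \<otimes> ack \<ominus> (x \<otimes> amk) \<otimes> \<one> \<in> I" using ic_mult[OF I cc(2) one_closed _ p1] cc ac' by simp
  have "((x \<otimes> amk) \<otimes> ack \<oplus> a [^] m \<otimes> e) \<ominus> ((x \<otimes> amk) \<otimes> \<one> \<oplus> a1) \<in> I"
    using ic_add[OF I _ _ _ _ p2 a1(2)[folded e_def]] cc ac' e by simp
  moreover have "x \<otimes> amk \<oplus> a1 \<in> A" using subringE(6,7)[OF A] amkA a1 Cons.prems by auto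
  ultimately show ?case unfolding eq using cc ac' by (auto intro!: bexI[of _ "x \<otimes> amk \<oplus> a1"])
qed

lemma core:
  assumes A: "subring A R" and I: "ideal I R" and a: "a \<in> A" and c: "c \<in> carrier R"
    and ac: "a \<otimes> c \<ominus> \<one> \<in> I" and int: "integral_over R A c"
  shows "\<exists>a'\<in>A. \<one> \<oplus> a \<otimes> a' \<in> I"
proof -
  have Ac: "A \<subseteq> carrier R" using subringE(1)[OF A] .
  have aC: "a \<in> carrier R" using a Ac by auto
  obtain p where p: "p \<noteq> []" "polynomial A p" "hd p = \<one>" "eval p c = \<zero>"
    using int unfolding integral_over_def by auto
  obtain xs where pxs: "p = \<one> # xs" using p(1,3) by (cases p) auto
  have xsA: "set xs \<subseteq> A" using p(2) pxs unfolding polynomial_def by auto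
  define e where "e = eval xs c"
  have e: "e \<in> carrier R" unfolding e_def using eval_in_carrier xsA Ac c by auto
  define n where "n = length xs"
  have ev: "c [^] n \<oplus> e = \<zero>" using p(4) c e unfolding pxs e_def n_def by simp
  have zI: "\<zero> \<in> I" using additive_subgroup.zero_closed[OF ideal.axioms(1)[OF I]] .
  show ?thesis
  proof (cases n)
    case 0
    then have "\<one> = \<zero>" using ev e unfolding e_def n_def by simp
    then have "\<one> \<oplus> a \<otimes> \<zero> \<in> I" using zI aC by simp
    then show ?thesis using subringE(2)[OF A] by auto
  next
    case (Suc n')
    obtain a1 where a1: "a1 \<in> A" "a [^] n' \<otimes> e \<ominus> a1 \<in> I"
      using key[OF A I a c ac xsA, of n'] Suc unfolding n_def e_def by auto
    have cc: "a [^] n' \<in> carrier R" "a1 \<in> carrier R" "c [^] n \<in> carrier R" "(a \<otimes> c) [^] n \<in> carrier R"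
      using aC c a1 Ac by auto
    have q1: "a \<otimes> (a [^] n' \<otimes> e) \<ominus> a \<otimes> a1 \<in> I" using ic_mult[OF I _ _ aC a1(2)] cc e by simp
    have q2: "(a \<otimes> c) [^] n \<ominus> \<one> \<in> I" using ic_pow[OF I _ ac] aC c by simp
    have "((a \<otimes> c) [^] n \<oplus> a \<otimes> (a [^] n' \<otimes> e)) \<ominus> (\<one> \<oplus> a \<otimes> a1) \<in> I"
      using ic_add[OF I _ _ _ _ q2 q1] cc e aC by simp
    moreover have "(a \<otimes> c) [^] n \<oplus> a \<otimes> (a [^] n' \<otimes> e) = \<zero>"
    proof -
      have h1: "(a \<otimes> c) [^] n = a [^] n \<otimes> c [^] n" using nat_pow_distrib[OF aC c] .
      have h2: "a [^] n = a [^] n' \<otimes> a" using Suc by simp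
      have "(a \<otimes> c) [^] n = (a [^] n' \<otimes> a) \<otimes> c [^] n" by (simp only: h1 h2)
      then have "(a \<otimes> c) [^] n \<oplus> a \<otimes> (a [^] n' \<otimes> e) = (a [^] n' \<otimes> a) \<otimes> (c [^] n \<oplus> e)"
        using cc e aC by (simp, algebra)
      then show ?thesis using ev cc aC by simp
    qed
    ultimately have "\<zero> \<ominus> (\<one> \<oplus> a \<otimes> a1) \<in> I" by simp
    then have "\<ominus> (\<zero> \<ominus> (\<one> \<oplus> a \<otimes> a1)) \<in> I"
      using additive_subgroup.a_inv_closed[OF ideal.axioms(1)[OF I]] by blast
    moreover have "\<ominus> (\<zero> \<ominus> (\<one> \<oplus> a \<otimes> a1)) = \<one> \<oplus> a \<otimes> a1" using aC cc by algebra
    ultimately show ?thesis using a1 by auto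
  qed
qed

lemma units_sub:
  assumes A: "subring A R" and int: "\<forall>b\<in>carrier R. integral_over R A b"
  shows "Units (R\<lparr>carrier := A\<rparr>) = Units R \<inter> A"
proof
  have Ac: "A \<subseteq> carrier R" using subringE(1)[OF A] .
  show "Units (R\<lparr>carrier := A\<rparr>) \<subseteq> Units R \<inter> A" using Ac unfolding Units_def by auto
  show "Units R \<inter> A \<subseteq> Units (R\<lparr>carrier := A\<rparr>)"
  proof
    fix a assume a: "a \<in> Units R \<inter> A"
    have aC: "a \<in> carrier R" "inv a \<in> carrier R" "a \<otimes> inv a = \<one>" using a by auto
    have "a \<otimes> inv a \<ominus> \<one> \<in> {\<zero>}" using aC by (simp add: r_neg minus_eq)
    then obtain a' where a': "a' \<in> A" "\<one> \<oplus> a \<otimes> a' \<in> {\<zero>}"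
      using core[OF A zeroideal _ aC(2)] a int aC by blast
    have a'C: "a' \<in> carrier R" using a' Ac by auto
    have "a \<otimes> (\<ominus> a') = \<one> \<ominus> (\<one> \<oplus> a \<otimes> a')" using aC a'C by algebra
    then have inv1: "a \<otimes> (\<ominus> a') = \<one>" using a' by (simp add: minus_eq)
    then have inv2: "(\<ominus> a') \<otimes> a = \<one>" using aC a'C by (simp add: m_comm)
    have "\<ominus> a' \<in> A" using subringE(5)[OF A a'(1)] .
    then show "a \<in> Units (R\<lparr>carrier := A\<rparr>)" unfolding Units_def using a inv1 inv2 by auto
  qed
qed

lemma max_inv:
  assumes M: "maximalideal M R" and xc: "x \<in> carrier R" and xM: "x \<notin> M"
  shows "\<exists>r\<in>carrier R. x \<otimes> r \<ominus> \<one> \<in> M"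
proof -
  interpret maximalideal M R by fact
  have id: "ideal (M <+> PIdl x) R" using add_ideals[OF is_ideal cgenideal_ideal[OF xc]] .
  have "M \<subseteq> M <+> PIdl x"
  proof
    fix m assume "m \<in> M"
    moreover have "\<zero> \<in> PIdl x" using xc unfolding cgenideal_def by (auto intro!: exI[of _ \<zero>])
    moreover have "m = m \<oplus> \<zero>" using \<open>m \<in> M\<close> a_subset by auto
    ultimately show "m \<in> M <+> PIdl x" unfolding set_add_def' by blast
  qed
  moreover have "x \<in> M <+> PIdl x"
  proof -
    have "x = \<zero> \<oplus> x" using xc by simp
    moreover have "x \<in> PIdl x" using cgenideal_self[OF xc] .
    ultimately show ?thesis unfolding set_add_def' using additive_subgroup.zero_closed[OF is_additive_subgroup] by auto
  qed
  moreover have "M <+> PIdl x \<subseteq> carrier R" using ideal.axioms(1)[OF id] additive_subgroup.a_subset by blast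
  ultimately have "M <+> PIdl x = carrier R" using I_maximal[OF id] xM by blast
  then have "\<one> \<in> M <+> PIdl x" by simp
  then obtain m r where mr: "m \<in> M" "r \<in> carrier R" "\<one> = m \<oplus> r \<otimes> x"
    unfolding set_add_def' cgenideal_def by auto
  have mc: "m \<in> carrier R" using mr a_subset by auto
  have "x \<otimes> r \<ominus> \<one> = \<ominus> m" using mr mc xc by (simp, algebra)
  then have "x \<otimes> r \<ominus> \<one> \<in> M" using a_inv_closed[OF mr(1)] by simp
  then show ?thesis using mr(2) by blast
qed

lemma jac_sub:
  assumes A: "subring A R" and int: "\<forall>b\<in>carrier R. integral_over R A b"
  shows "jacobson (R\<lparr>carrier := A\<rparr>) = jacobson R \<inter> A"
proof -
  have Ac: "A \<subseteq> carrier R" using subringE(1)[OF A] .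
  have crA: "cring (R\<lparr>carrier := A\<rparr>)" using subcring_iff[OF Ac] subcringI'[OF A] by simp
  show ?thesis
  proof
    show "jacobson (R\<lparr>carrier := A\<rparr>) \<subseteq> jacobson R \<inter> A"
    proof
      fix x assume xJ: "x \<in> jacobson (R\<lparr>carrier := A\<rparr>)"
      have xA: "x \<in> A" using xJ unfolding jacobson_def by auto
      have xC: "x \<in> carrier R" using xA Ac by auto
      have "x \<in> M" if M: "maximalideal M R" for M
      proof (rule ccontr)
        assume xM: "x \<notin> M"
        interpret M: maximalideal M R by fact
        obtain r where r: "r \<in> carrier R" "x \<otimes> r \<ominus> \<one> \<in> M" using max_inv[OF M xC xM] by auto
        obtain a' where a': "a' \<in> A" "\<one> \<oplus> x \<otimes> a' \<in> M"
          using core[OF A M.is_ideal xA r(1) r(2)] int r(1) by auto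
        have "\<one> \<oplus> a' \<otimes> x \<in> Units (R\<lparr>carrier := A\<rparr>)"
          using cring.jacobson_unit[OF crA xJ, of a'] a' by simp
        moreover have "a' \<otimes> x = x \<otimes> a'" using m_comm a' Ac xC by auto
        ultimately have u: "\<one> \<oplus> x \<otimes> a' \<in> Units R" using units_sub[OF A int] by simp
        then have "inv (\<one> \<oplus> x \<otimes> a') \<otimes> (\<one> \<oplus> x \<otimes> a') \<in> M"
          using M.I_l_closed[OF a'(2)] Units_inv_closed[OF u] by blast
        then have "\<one> \<in> M" using Units_l_inv[OF u] by simp
        then show False using M.one_imp_carrier M.I_notcarr by auto
      qed
      then show "x \<in> jacobson R \<inter> A" using xA xC unfolding jacobson_def by auto
    qed
    show "jacobson R \<inter> A \<subseteq> jacobson (R\<lparr>carrier := A\<rparr>)"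
    proof
      fix x assume x: "x \<in> jacobson R \<inter> A"
      show "x \<in> jacobson (R\<lparr>carrier := A\<rparr>)"
      proof (rule cring.jacobsonI[OF crA])
        show "x \<in> carrier (R\<lparr>carrier := A\<rparr>)" using x by simp
        fix r assume r: "r \<in> carrier (R\<lparr>carrier := A\<rparr>)"
        have "\<one> \<oplus> r \<otimes> x \<in> Units R" using jacobson_unit[of x r] x r Ac by auto
        moreover have "\<one> \<oplus> r \<otimes> x \<in> A" using x r subringE(3,6,7)[OF A] by simp
        ultimately show "\<one>\<^bsub>R\<lparr>carrier := A\<rparr>\<^esub> \<oplus>\<^bsub>R\<lparr>carrier := A\<rparr>\<^esub> r \<otimes>\<^bsub>R\<lparr>carrier := A\<rparr>\<^esub> x \<in> Units (R\<lparr>carrier := A\<rparr>)"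
          using units_sub[OF A int] by simp
      qed
    qed
  qed
qed

end
theorem corollary9p19:
  fixes B :: "('a, 'b) ring_scheme" and A :: "'a set"
  assumes "cring B"
    and "subring A B"
    and "\<forall>b \<in> carrier B. integral_over B A b"
    and "sublocalizable B"
  shows "sublocalizable (B\<lparr>carrier := A\<rparr>)
    \<and> sublocalization (B\<lparr>carrier := A\<rparr>) = one_closure (B\<lparr>carrier := A\<rparr>) (Units (B\<lparr>carrier := A\<rparr>))
    \<and> one_closure (B\<lparr>carrier := A\<rparr>) (Units (B\<lparr>carrier := A\<rparr>)) = one_closure B (Units B) \<inter> A
    \<and> subring (sublocalization (B\<lparr>carrier := A\<rparr>)) (B\<lparr>carrier := A\<rparr>)
    \<and> local_ring (B\<lparr>carrier := sublocalization (B\<lparr>carrier := A\<rparr>)\<rparr>)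
    \<and> maximalideal (jacobson (B\<lparr>carrier := A\<rparr>)) (B\<lparr>carrier := sublocalization (B\<lparr>carrier := A\<rparr>)\<rparr>)
    \<and> jacobson (B\<lparr>carrier := A\<rparr>) = jacobson B \<inter> A
    \<and> Units (B\<lparr>carrier := A\<rparr>) = Units B \<inter> A"
proof -
  interpret cring B by fact
  have Ac: "A \<subseteq> carrier B" using subringE(1)[OF assms(2)] .
  have crA: "cring (B\<lparr>carrier := A\<rparr>)" using subcring_iff[OF Ac] subcringI'[OF assms(2)] by simp
  have U: "Units (B\<lparr>carrier := A\<rparr>) = Units B \<inter> A" using units_sub[OF assms(2,3)] .
  have J: "jacobson (B\<lparr>carrier := A\<rparr>) = jacobson B \<inter> A" using jac_sub[OF assms(2,3)] .
  have slA: "sublocalizable (B\<lparr>carrier := A\<rparr>)"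
    unfolding sublocalizable_def
  proof (intro conjI ballI)
    show "\<one>\<^bsub>B\<lparr>carrier := A\<rparr>\<^esub> \<noteq> \<zero>\<^bsub>B\<lparr>carrier := A\<rparr>\<^esub>" using assms(4) unfolding sublocalizable_def by simp
    fix u v assume u: "u \<in> Units (B\<lparr>carrier := A\<rparr>)" and v: "v \<in> Units (B\<lparr>carrier := A\<rparr>)"
    have "u \<oplus>\<^bsub>B\<^esub> v \<in> Units B \<union> jacobson B" using assms(4) u v U unfolding sublocalizable_def by auto
    moreover have "u \<oplus>\<^bsub>B\<^esub> v \<in> A" using u v U subringE(7)[OF assms(2)] by auto
    ultimately show "u \<oplus>\<^bsub>B\<lparr>carrier := A\<rparr>\<^esub> v \<in> Units (B\<lparr>carrier := A\<rparr>) \<union> jacobson (B\<lparr>carrier := A\<rparr>)"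
      using U J by auto
  qed
  have SLA: "sublocalization (B\<lparr>carrier := A\<rparr>) = cring.SL (B\<lparr>carrier := A\<rparr>)"
    unfolding sublocalization_def cring.SL_def[OF crA] ..
  have c2: "sublocalization (B\<lparr>carrier := A\<rparr>) = one_closure (B\<lparr>carrier := A\<rparr>) (Units (B\<lparr>carrier := A\<rparr>))"
    unfolding SLA using cring.SL_one_closure[OF crA slA] by simp
  have c3: "one_closure (B\<lparr>carrier := A\<rparr>) (Units (B\<lparr>carrier := A\<rparr>)) = one_closure B (Units B) \<inter> A"
    using cring.SL_one_closure[OF crA slA] SL_one_closure[OF assms(4)]
    unfolding cring.SL_def[OF crA] SL_def U J by auto
  show ?thesis
    using slA c2 c3 U J cring.SL_subring[OF crA slA] cring.SL_local[OF crA slA]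
      cring.J_maximal_SL[OF crA slA] unfolding SLA by auto
qed

end
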